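(* Let $S\subseteq M_n$ be a noncommutative graph. Then the minimum defining $\mathcal{H}(S)$ is attained by some $m\in\mathbb{N}$ with $m\leq n^4$ and some $B\in M_m(S)$ with $\sum_{i=1}^m B_{i,i}=I_n$.
   Context: All scalars are complex; $M_n$ denotes complex $n\times n$ matrices. A noncommutative graph is a linear subspace $S\subseteq M_n$ that contains $I_n$ and is closed under conjugate transpose. For a subspace $S\subseteq M_n$, $M_m(S)$ denotes the set of $m\times m$ block matrices $B=[B_{i,j}]_{i,j\in[m]}$ with every block $B_{i,j}\in S$, viewed as elements of $M_{mn}$. The Haemers bound is $\mathcal{H}(S)=\min\{\mathrm{rk}(B):\ m\in\mathbb{N},\ B\in M_m(S),\ \sum_{i=1}^m B_{i,i}=I_n\}$. *)

theory Defs
  imports "Jordan_Normal_Form.DL_Rank"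
begin

definition conj_transpose :: "complex mat \<Rightarrow> complex mat" where
  "conj_transpose A = mat (dim_col A) (dim_row A) (\<lambda>(i,j). cnj (A $$ (j,i)))"

definition subspace_mat :: "nat \<Rightarrow> complex mat set \<Rightarrow> bool" where
  "subspace_mat n S \<longleftrightarrow> S \<subseteq> carrier_mat n n \<and> 0\<^sub>m n n \<in> S \<and>
     (\<forall>A\<in>S. \<forall>B\<in>S. A + B \<in> S) \<and> (\<forall>c::complex. \<forall>A\<in>S. c \<cdot>\<^sub>m A \<in> S)"

definition nc_graph :: "nat \<Rightarrow> complex mat set \<Rightarrow> bool" where
  "nc_graph n S \<longleftrightarrow> subspace_mat n S \<and> 1\<^sub>m n \<in> S \<and> (\<forall>A\<in>S. conj_transpose A \<in> S)"

definition block :: "nat \<Rightarrow> complex mat \<Rightarrow> nat \<Rightarrow> nat \<Rightarrow> complex mat" where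
  "block n B i j = mat n n (\<lambda>(a,b). B $$ (i * n + a, j * n + b))"

text \<open>B belongs to M_m(S) (as an element of M_{mn}).\<close>
definition block_mats :: "nat \<Rightarrow> nat \<Rightarrow> complex mat set \<Rightarrow> complex mat set" where
  "block_mats n m S = {B. B \<in> carrier_mat (m * n) (m * n) \<and>
      (\<forall>i<m. \<forall>j<m. block n B i j \<in> S)}"

definition crank :: "complex mat \<Rightarrow> nat" where
  "crank B = vec_space.rank (dim_row B) B"

definition diag_block_sum :: "nat \<Rightarrow> nat \<Rightarrow> complex mat \<Rightarrow> complex mat" where
  "diag_block_sum n m B = mat n n (\<lambda>(a,b). \<Sum>i<m. block n B i i $$ (a,b))"

definition haemers_feasible :: "nat \<Rightarrow> complex mat set \<Rightarrow> nat \<Rightarrow> complex mat \<Rightarrow> bool" where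
  "haemers_feasible n S m B \<longleftrightarrow> m \<ge> 1 \<and> B \<in> block_mats n m S \<and>
      diag_block_sum n m B = 1\<^sub>m n"

definition haemers :: "nat \<Rightarrow> complex mat set \<Rightarrow> nat" where
  "haemers n S = (LEAST r. \<exists>m B. haemers_feasible n S m B \<and> crank B = r)"

end

theory Submission
  imports Defs
begin

lemma rank_sum_prod:
  fixes A :: "'a::field mat"
  assumes "A \<in> carrier_mat N M"
    and "\<And>x y. x < N \<Longrightarrow> y < M \<Longrightarrow> A $$ (x,y) = (\<Sum>s<r. f s x * g s y)"
  shows "vec_space.rank N A \<le> r"
  using assms
proof (induction r arbitrary: A)
  case 0
  then have "A = 0\<^sub>m N M" by (intro eq_matI) auto
  then show ?case using vec_space.rank_0I by simp
next
  case (Suc r)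
  define A1 where "A1 = mat N M (\<lambda>(x,y). \<Sum>s<r. f s x * g s y)"
  define A2 where "A2 = mat N M (\<lambda>(x,y). f r x * g r y)"
  have c1: "A1 \<in> carrier_mat N M" "A2 \<in> carrier_mat N M" unfolding A1_def A2_def by auto
  have "A = A1 + A2" using Suc.prems by (intro eq_matI) (auto simp: A1_def A2_def)
  moreover have "vec_space.rank N A1 \<le> r" by (rule Suc.IH[OF c1(1)]) (auto simp: A1_def)
  moreover have "vec_space.rank N A2 \<le> 1"
    by (rule vec_space.rank_le_1_product_entries[OF c1(2), of "f r" "g r"]) (auto simp: A2_def)
  moreover have "vec_space.rank N (A1 + A2) \<le> vec_space.rank N A1 + vec_space.rank N A2"
    by (rule vec_space.rank_subadditive[OF c1])
  ultimately show ?case by simp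
qed

lemma wide_dep:
  fixes v :: "nat \<Rightarrow> 'a::field vec"
  assumes v: "\<And>i. i < m \<Longrightarrow> v i \<in> carrier_vec d" and dm: "d < m"
  shows "\<exists>c. (\<exists>i<m. c i \<noteq> 0) \<and> (\<forall>t<d. (\<Sum>i<m. c i * v i $ t) = 0)"
proof (cases "inj_on v {..<m}")
  case False
  then obtain i j where ij: "i < m" "j < m" "i \<noteq> j" "v i = v j"
    unfolding inj_on_def by auto
  define c where "c = (\<lambda>k. (if k = i then 1 else 0) - (if k = j then 1 else (0::'a)))"
  have "(\<Sum>k<m. c k * v k $ t) = 0" for t
  proof -
    have e: "c k * v k $ t = (if k = i then v k $ t else 0) - (if k = j then v k $ t else 0)" for k
      using ij(3) by (simp add: c_def)
    have "(\<Sum>k<m. c k * v k $ t) = (\<Sum>k<m. (if k = i then v k $ t else 0)) - (\<Sum>k<m. (if k = j then v k $ t else 0))"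
      unfolding e by (rule sum_subtractf)
    also have "\<dots> = 0" using ij by simp
    finally show ?thesis .
  qed
  moreover have "c i \<noteq> 0" using ij by (simp add: c_def)
  ultimately show ?thesis using ij by blast
next
  case True
  interpret vs: vec_space "TYPE('a)" d .
  define V where "V = v ` {..<m}"
  have Vc: "V \<subseteq> carrier_vec d" using v by (auto simp: V_def)
  have cardV: "card V = m" using True by (simp add: V_def card_image)
  have finV: "finite V" by (simp add: V_def)
  have "vs.lin_dep V"
  proof (rule ccontr)
    assume "\<not> vs.lin_dep V"
    then have "card V \<le> vs.dim" using vs.li_le_dim(2)[OF vs.fin_dim Vc] by simp
    then show False using cardV dm vs.dim_is_n by simp
  qed
  then obtain a w where a: "vs.lincomb a V = 0\<^sub>v d" "w \<in> V" "a w \<noteq> 0"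
    using vs.finite_lin_dep[OF finV _ Vc] by auto
  obtain i where i: "i < m" "w = v i" using a(2) by (auto simp: V_def)
  have "(\<Sum>k<m. a (v k) * v k $ t) = 0" if t: "t < d" for t
  proof -
    have "0 = vs.lincomb a V $ t" using a(1) t by simp
    also have "\<dots> = (\<Sum>x\<in>V. a x * x $ t)" by (rule vs.lincomb_index[OF t Vc])
    also have "\<dots> = (\<Sum>k<m. a (v k) * v k $ t)" unfolding V_def
      by (rule sum.reindex[OF True, unfolded comp_def])
    finally show ?thesis by simp
  qed
  then show ?thesis using i a(3) by (intro exI[of _ "\<lambda>k. a (v k)"]) auto
qed

lemma rank_factor:
  fixes A :: "'a::field mat"
  assumes A: "A \<in> carrier_mat N M"
  shows "\<exists>f g. \<forall>x<N. \<forall>y<M. A $$ (x,y) = (\<Sum>s<vec_space.rank N A. f s x * g s y)"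
proof -
  interpret vs: vec_space "TYPE('a)" N .
  have colsC: "set (cols A) \<subseteq> carrier_vec N" using A cols_dim by blast
  obtain W where W: "maximal W (\<lambda>T. T \<subseteq> set (cols A) \<and> vs.lin_indpt T)"
    using maximal_exists[of "(\<lambda>T. T \<subseteq> set (cols A) \<and> vs.lin_indpt T)" "card (set (cols A))" "{}"]
    by (meson List.finite_set card_mono empty_iff empty_subsetI vs.finite_lin_indpt2 rev_finite_subset)
  have rk: "vs.rank A = card W" by (rule vs.rank_card_indpt[OF A W])
  have WS: "W \<subseteq> set (cols A)" and Wli: "vs.lin_indpt W" using W unfolding maximal_def by auto
  have finW: "finite W" using WS finite_subset by blast
  have WC: "W \<subseteq> carrier_vec N" using WS colsC by blast
  have span: "c \<in> vs.span W" if c: "c \<in> set (cols A)" for c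
  proof (rule ccontr)
    assume ns: "c \<notin> vs.span W"
    have cW: "c \<notin> W" using ns vs.in_own_span[OF WC] by blast
    have cC: "c \<in> carrier_vec N" using c colsC by blast
    have "vs.lin_indpt (W \<union> {c})" using vs.lin_dep_iff_in_span[OF WC Wli cC cW] ns by blast
    moreover have "W \<union> {c} \<subseteq> set (cols A)" using WS c by blast
    ultimately have "W \<union> {c} = W" using W unfolding maximal_def by blast
    then show False using cW by blast
  qed
  have "\<forall>y\<in>{..<M}. \<exists>a. vs.lincomb a W = col A y"
  proof
    fix y assume "y \<in> {..<M}"
    then have "col A y \<in> set (cols A)" using A by (auto simp: cols_def)
    then show "\<exists>a. vs.lincomb a W = col A y"
      using vs.finite_in_span[OF finW WC span] by auto
  qed
  then obtain a where a0: "\<forall>y\<in>{..<M}. vs.lincomb (a y) W = col A y" by (metis bchoice)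
  have a: "\<And>y. y < M \<Longrightarrow> vs.lincomb (a y) W = col A y" using a0 by blast
  obtain ws where ws: "distinct ws" "set ws = W" using finite_distinct_list[OF finW] by blast
  have len: "length ws = card W" using ws distinct_card by fastforce
  have "A $$ (x,y) = (\<Sum>s<card W. (\<lambda>s x. ws ! s $ x) s x * (\<lambda>s y. a y (ws ! s)) s y)"
    if xy: "x < N" "y < M" for x y
  proof -
    have "A $$ (x,y) = col A y $ x" using A xy by simp
    also have "\<dots> = vs.lincomb (a y) W $ x" using a xy by simp
    also have "\<dots> = (\<Sum>w\<in>W. a y w * w $ x)" by (rule vs.lincomb_index[OF xy(1) WC])
    also have "\<dots> = (\<Sum>s<length ws. a y (ws ! s) * ws ! s $ x)"
      unfolding ws(2)[symmetric] sum.distinct_set_conv_list[OF ws(1)]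
      by (simp add: sum_list_sum_nth atLeast0LessThan)
    finally show ?thesis using len by (simp add: mult.commute)
  qed
  then show ?thesis unfolding rk
    by (intro exI[of _ "\<lambda>s x. ws ! s $ x"] exI[of _ "\<lambda>s y. a y (ws ! s)"]) auto
qed

lemma idx_lt: "i < m \<Longrightarrow> a < (n::nat) \<Longrightarrow> i * n + a < m * n"
proof -
  assume "i < m" "a < n"
  then have "i * n + a < (i + 1) * n" by simp
  also have "\<dots> \<le> m * n" using \<open>i < m\<close> by (intro mult_le_mono1) simp
  finally show ?thesis .
qed

lemma reduce_step:
  assumes n1: "n \<ge> 1" and G: "nc_graph n S" and F: "haemers_feasible n S m B"
    and hn: "crank B \<le> n" and mbig: "n * n < m"
  shows "\<exists>B'. haemers_feasible n S (m - 1) B' \<and> crank B' \<le> crank B"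
proof -
  define N where "N = m * n"
  define h where "h = crank B"
  have BC: "B \<in> carrier_mat N N" and Bblk: "\<And>i j. i < m \<Longrightarrow> j < m \<Longrightarrow> block n B i j \<in> S"
    and Bdiag: "diag_block_sum n m B = 1\<^sub>m n"
    using F unfolding haemers_feasible_def block_mats_def N_def by auto
  have hdef: "h = vec_space.rank N B" unfolding h_def crank_def using BC by simp
  obtain f g where fg: "\<And>x y. x < N \<Longrightarrow> y < N \<Longrightarrow> B $$ (x,y) = (\<Sum>s<h. f s x * g s y)"
    using rank_factor[OF BC] unfolding hdef by blast
  define v where "v = (\<lambda>i. vec (n * h) (\<lambda>t. f (t mod h) (i * n + t div h)))"
  have nh: "n * h < m" using mbig hn h_def by (metis le_less_trans mult_le_mono2)
  obtain c j where cj: "j < m" "c j \<noteq> 0" and c0: "\<And>t. t < n * h \<Longrightarrow> (\<Sum>i<m. c i * v i $ t) = 0"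
    using wide_dep[of m v "n * h", OF _ nh] unfolding v_def by auto
  have key: "(\<Sum>i<m. c i * B $$ (i * n + a, y)) = 0" if a: "a < n" and y: "y < N" for a y
  proof -
    have "(\<Sum>i<m. c i * B $$ (i * n + a, y)) = (\<Sum>i<m. c i * (\<Sum>s<h. f s (i * n + a) * g s y))"
      using fg idx_lt a y by (intro sum.cong refl) (simp add: N_def)
    also have "\<dots> = (\<Sum>s<h. (\<Sum>i<m. c i * f s (i * n + a)) * g s y)"
      by (simp add: sum_distrib_left sum_distrib_right mult.assoc sum.swap[of _ "{..<m}"])
    also have "\<dots> = 0"
    proof (intro sum.neutral ballI)
      fix s assume s: "s \<in> {..<h}"
      have t: "a * h + s < n * h" using s a
        by (metis lessThan_iff idx_lt mult.commute)
      have "(\<Sum>i<m. c i * f s (i * n + a)) = (\<Sum>i<m. c i * v i $ (a * h + s))"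
        using t s by (intro sum.cong refl) (simp add: v_def)
      also have "\<dots> = 0" using c0[OF t] .
      finally show "(\<Sum>i<m. c i * f s (i * n + a)) * g s y = 0" by simp
    qed
    finally show ?thesis .
  qed
  define d where "d = (\<lambda>i. - c i / c j)"
  have dep: "B $$ (j * n + a, y) = (\<Sum>i\<in>{..<m} - {j}. d i * B $$ (i * n + a, y))"
    if a: "a < n" and y: "y < N" for a y
  proof -
    have "0 = (\<Sum>i<m. c i * B $$ (i * n + a, y))" using key[OF a y] by simp
    also have "\<dots> = c j * B $$ (j * n + a, y) + (\<Sum>i\<in>{..<m} - {j}. c i * B $$ (i * n + a, y))"
      using cj(1) by (subst sum.remove[of _ j]) auto
    finally have e: "(\<Sum>i\<in>{..<m} - {j}. c i * B $$ (i * n + a, y)) = - c j * B $$ (j * n + a, y)"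
      by (simp add: add_eq_0_iff)
    have "(\<Sum>i\<in>{..<m} - {j}. d i * B $$ (i * n + a, y)) = (- 1 / c j) * (\<Sum>i\<in>{..<m} - {j}. c i * B $$ (i * n + a, y))"
      unfolding d_def sum_distrib_left by (intro sum.cong refl) simp
    also have "\<dots> = B $$ (j * n + a, y)" unfolding e using cj(2) by simp
    finally show ?thesis by simp
  qed
  define m' where "m' = m - 1"
  define sg where "sg = (\<lambda>l. if l < j then l else Suc l)"
  define \<sigma> where "\<sigma> = (\<lambda>x. sg (x div n) * n + x mod n)"
  have n0: "n > 0" using n1 by simp
  have sgm: "sg l < m" if "l < m'" for l using that cj(1) by (auto simp: sg_def m'_def)
  have \<sigma>N: "\<sigma> x < N" if "x < m' * n" for x
  proof -
    have "x div n < m'" using that n0 by (simp add: less_mult_imp_div_less)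
    then have "sg (x div n) < m" by (rule sgm)
    then show ?thesis unfolding \<sigma>_def N_def using idx_lt[of "sg (x div n)" m "x mod n" n] n0 by simp
  qed
  have jN: "j * n + b < N" if "b < n" for b using idx_lt[OF cj(1) that] by (simp add: N_def)
  have \<sigma>blk: "\<sigma> (k * n + a) = sg k * n + a" if "a < n" for k a
    using that n0 by (simp add: \<sigma>_def)
  define B' where "B' = mat (m' * n) (m' * n) (\<lambda>(x,y). B $$ (\<sigma> x, \<sigma> y) + d (sg (y div n)) * B $$ (\<sigma> x, j * n + y mod n))"
  have B'C: "B' \<in> carrier_mat (m' * n) (m' * n)" by (simp add: B'_def)
  have rk: "crank B' \<le> h"
  proof -
    have "vec_space.rank (m' * n) B' \<le> h"
    proof (rule rank_sum_prod[OF B'C, where r = h and f = "\<lambda>s x. f s (\<sigma> x)" and g = "\<lambda>s y. g s (\<sigma> y) + d (sg (y div n)) * g s (j * n + y mod n)"])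
      fix x y assume xy: "x < m' * n" "y < m' * n"
      have "B' $$ (x,y) = B $$ (\<sigma> x, \<sigma> y) + d (sg (y div n)) * B $$ (\<sigma> x, j * n + y mod n)"
        using xy by (simp add: B'_def)
      also have "\<dots> = (\<Sum>s<h. f s (\<sigma> x) * g s (\<sigma> y)) + d (sg (y div n)) * (\<Sum>s<h. f s (\<sigma> x) * g s (j * n + y mod n))"
        using fg \<sigma>N xy jN n0 by simp
      also have "\<dots> = (\<Sum>s<h. f s (\<sigma> x) * (g s (\<sigma> y) + d (sg (y div n)) * g s (j * n + y mod n)))"
        by (simp add: sum_distrib_left sum.distrib algebra_simps)
      finally show "B' $$ (x,y) = (\<Sum>s<h. f s (\<sigma> x) * (g s (\<sigma> y) + d (sg (y div n)) * g s (j * n + y mod n)))" .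
    qed
    then show ?thesis unfolding crank_def using B'C by simp
  qed
  have blk: "block n B' k l = block n B (sg k) (sg l) + d (sg l) \<cdot>\<^sub>m block n B (sg k) j"
    if kl: "k < m'" "l < m'" for k l
  proof (rule eq_matI)
    fix a b assume ab: "a < dim_row (block n B (sg k) (sg l) + d (sg l) \<cdot>\<^sub>m block n B (sg k) j)"
      "b < dim_col (block n B (sg k) (sg l) + d (sg l) \<cdot>\<^sub>m block n B (sg k) j)"
    then have ab': "a < n" "b < n" by (auto simp: block_def)
    have "k * n + a < m' * n" "l * n + b < m' * n" using idx_lt[OF kl(1) ab'(1)] idx_lt[OF kl(2) ab'(2)] by auto
    then show "block n B' k l $$ (a, b) = (block n B (sg k) (sg l) + d (sg l) \<cdot>\<^sub>m block n B (sg k) j) $$ (a, b)"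
      using ab' n0 by (simp add: block_def B'_def \<sigma>blk)
  qed (auto simp: block_def)
  have sub: "subspace_mat n S" using G unfolding nc_graph_def by auto
  have inS: "block n B' k l \<in> S" if kl: "k < m'" "l < m'" for k l
  proof -
    have "block n B (sg k) (sg l) \<in> S" "block n B (sg k) j \<in> S" using Bblk sgm kl cj(1) by auto
    moreover have "\<And>A B c. A \<in> S \<Longrightarrow> B \<in> S \<Longrightarrow> A + c \<cdot>\<^sub>m B \<in> S" using sub unfolding subspace_mat_def by blast
    ultimately show ?thesis unfolding blk[OF kl] by blast
  qed
  have diag: "diag_block_sum n m' B' = 1\<^sub>m n"
  proof (rule eq_matI)
    fix a b assume ab: "a < dim_row (1\<^sub>m n)" "b < dim_col (1\<^sub>m n)"
    then have ab': "a < n" "b < n" by auto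
    have orig: "(\<Sum>i<m. B $$ (i * n + a, i * n + b)) = 1\<^sub>m n $$ (a, b)"
    proof -
      have "1\<^sub>m n $$ (a, b) = diag_block_sum n m B $$ (a,b)" using Bdiag by simp
      also have "\<dots> = (\<Sum>i<m. B $$ (i * n + a, i * n + b))"
        using ab' by (simp add: diag_block_sum_def block_def)
      finally show ?thesis by simp
    qed
    have inj: "inj_on sg {..<m'}" by (auto simp: inj_on_def sg_def split: if_splits)
    have img: "sg ` {..<m'} = {..<m} - {j}"
    proof
      show "sg ` {..<m'} \<subseteq> {..<m} - {j}" using cj(1) by (auto simp: sg_def m'_def)
    next
      show "{..<m} - {j} \<subseteq> sg ` {..<m'}"
      proof
        fix i assume i: "i \<in> {..<m} - {j}"
        show "i \<in> sg ` {..<m'}"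
        proof (cases "i < j")
          case True
          then show ?thesis using i cj(1) by (intro image_eqI[of _ _ i]) (auto simp: sg_def m'_def)
        next
          case False
          then show ?thesis using i by (intro image_eqI[of _ _ "i - 1"]) (auto simp: sg_def m'_def)
        qed
      qed
    qed
    define F where "F = (\<lambda>i. B $$ (i * n + a, i * n + b) + d i * B $$ (i * n + a, j * n + b))"
    have "diag_block_sum n m' B' $$ (a,b) = (\<Sum>k<m'. block n B' k k $$ (a,b))"
      using ab' by (simp add: diag_block_sum_def)
    also have "\<dots> = (\<Sum>k<m'. F (sg k))"
    proof (intro sum.cong refl)
      fix k assume k: "k \<in> {..<m'}"
      have "k * n + a < m' * n" "k * n + b < m' * n" using idx_lt[of k m' a n] idx_lt[of k m' b n] ab' k by auto
      then show "block n B' k k $$ (a,b) = F (sg k)"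
        using ab' n0 by (simp add: block_def B'_def \<sigma>blk F_def)
    qed
    also have "\<dots> = (\<Sum>i\<in>{..<m} - {j}. F i)"
      using sum.reindex[OF inj, of F] img by simp
    also have "\<dots> = (\<Sum>i\<in>{..<m} - {j}. B $$ (i * n + a, i * n + b)) + B $$ (j * n + a, j * n + b)"
      unfolding F_def sum.distrib using dep[OF ab'(1) jN[OF ab'(2)]] by simp
    also have "\<dots> = (\<Sum>i<m. B $$ (i * n + a, i * n + b))"
      using cj(1) by (subst (2) sum.remove[of _ j]) auto
    finally show "diag_block_sum n m' B' $$ (a,b) = 1\<^sub>m n $$ (a,b)" using orig by simp
  qed (auto simp: diag_block_sum_def)
  have "m' \<ge> 1"
  proof -
    have "1 \<le> n * n" using n1 by simp
    then show ?thesis using mbig unfolding m'_def by linarith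
  qed
  then have "haemers_feasible n S m' B'"
    unfolding haemers_feasible_def block_mats_def using B'C inS diag by auto
  then show ?thesis using rk unfolding m'_def h_def by blast
qed

theorem mainTheorem4:
  fixes n :: nat and S :: "complex mat set"
  assumes "n \<ge> 1" and "nc_graph n S"
  shows "\<exists>m B. m \<le> n ^ 4 \<and> haemers_feasible n S m B \<and> crank B = haemers n S"
proof -
  define h where "h = haemers n S"
  have f1: "haemers_feasible n S 1 (1\<^sub>m n)"
  proof -
    have "block n (1\<^sub>m n) 0 0 = 1\<^sub>m n" by (intro eq_matI) (auto simp: block_def)
    moreover have "diag_block_sum n 1 (1\<^sub>m n) = 1\<^sub>m n" by (intro eq_matI) (auto simp: diag_block_sum_def block_def)
    moreover have "1\<^sub>m n \<in> S" using assms(2) unfolding nc_graph_def by blast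
    ultimately show ?thesis unfolding haemers_feasible_def block_mats_def by auto
  qed
  have ex: "\<exists>r m B. haemers_feasible n S m B \<and> crank B = r" using f1 by blast
  have low: "h \<le> crank B" if "haemers_feasible n S m B" for m B
    unfolding h_def haemers_def using that by (intro Least_le) blast
  have "crank (1\<^sub>m n) \<le> n" unfolding crank_def
    using vec_space.rank_le_nc[of "1\<^sub>m n" n n] by simp
  then have hn: "h \<le> n" using low[OF f1] by simp
  obtain m0 B0 where m0: "haemers_feasible n S m0 B0" "crank B0 = h"
    using LeastI_ex[OF ex] unfolding h_def haemers_def by blast
  have "\<forall>B. haemers_feasible n S m B \<and> crank B = h \<longrightarrow>
          (\<exists>m' B'. m' \<le> n ^ 4 \<and> haemers_feasible n S m' B' \<and> crank B' = h)" for m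
  proof (induction m rule: less_induct)
    case (less m)
    show ?case
    proof (intro allI impI)
      fix B assume B: "haemers_feasible n S m B \<and> crank B = h"
      show "\<exists>m' B'. m' \<le> n ^ 4 \<and> haemers_feasible n S m' B' \<and> crank B' = h"
      proof (cases "m \<le> n ^ 4")
        case True
        then show ?thesis using B by blast
      next
        case False
        have "n ^ 2 \<le> n ^ 4" using assms(1) by (intro power_increasing) auto
        then have "n * n \<le> n ^ 4" by (simp add: power2_eq_square)
        then have mb: "n * n < m" using False by simp
        obtain B' where B': "haemers_feasible n S (m - 1) B'" "crank B' \<le> crank B"
          using reduce_step[OF assms(1,2) conjunct1[OF B] _ mb] B hn by auto
        have "crank B' = h" using B'(2) B low[OF B'(1)] by simp
        moreover have "m - 1 < m" using mb by simp
        ultimately show ?thesis using less.IH B'(1) by blast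
      qed
    qed
  qed
  then show ?thesis using m0 unfolding h_def by blast
qed

end
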